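(* For every countable subset $\Sigma \subseteq \mathbb{C}$ and every dense subset $T \subseteq \mathbb{C}$ there is a transcendental entire function $f$ such that $f^{(s)}(\Sigma) \subseteq T$ for all integers $s \geq 0$.
   Context: A transcendental entire function is an entire function $\mathbb{C}\to\mathbb{C}$ that is not a polynomial. $f^{(s)}$ denotes the $s$-th derivative of $f$, with $f^{(0)}=f$. *)

theory Defs
  imports "HOL-Analysis.Analysis" "HOL-Computational_Algebra.Polynomial"
begin

definition transcendental_entire :: "(complex \<Rightarrow> complex) \<Rightarrow> bool" where
  "transcendental_entire f \<longleftrightarrow>
     f holomorphic_on UNIV \<and> \<not> (\<exists>p :: complex poly. \<forall>z. f z = poly p z)"

end

theory Submission
  imports Defs
begin


lemma term_bound:
  fixes Q :: "nat \<Rightarrow> complex poly" and cc :: "nat \<Rightarrow> complex" and B :: "nat \<Rightarrow> real"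
  assumes B: "\<And>n k z. k \<le> n \<Longrightarrow> norm z \<le> real n \<Longrightarrow> norm (poly ((pderiv^^k)(Q n)) z) \<le> B n"
  and cc: "\<And>n. norm (cc n) * B n \<le> (1/2)^n"
  shows "eventually (\<lambda>n. \<forall>x\<in>cball (0::complex) R. norm (cc n * poly ((pderiv^^k)(Q n)) x) \<le> (1/2)^n) sequentially"
proof -
  have "\<forall>n\<ge>max k (nat \<lceil>R\<rceil>). \<forall>x\<in>cball (0::complex) R. norm (cc n * poly ((pderiv^^k)(Q n)) x) \<le> (1/2)^n"
  proof (intro allI impI ballI)
    fix n and x :: complex assume n: "max k (nat \<lceil>R\<rceil>) \<le> n" and x: "x \<in> cball 0 R"
    have x1: "norm x \<le> R" using x by (simp add: dist_norm)
    have "R \<le> real (nat \<lceil>R\<rceil>)" by linarith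
    also have "\<dots> \<le> real n" using n by simp
    finally have "norm x \<le> real n" using x1 by linarith
    then have "norm (poly ((pderiv^^k)(Q n)) x) \<le> B n" using B n by auto
    then have "norm (cc n) * norm (poly ((pderiv^^k)(Q n)) x) \<le> norm (cc n) * B n"
      by (simp add: mult_left_mono)
    then show "norm (cc n * poly ((pderiv^^k)(Q n)) x) \<le> (1/2)^n" using cc[of n] by (simp add: norm_mult)
  qed
  then show ?thesis unfolding eventually_sequentially by blast
qed

lemma series_deriv:
  fixes Q :: "nat \<Rightarrow> complex poly" and cc :: "nat \<Rightarrow> complex" and B :: "nat \<Rightarrow> real"
  assumes B: "\<And>n k z. k \<le> n \<Longrightarrow> norm z \<le> real n \<Longrightarrow> norm (poly ((pderiv^^k)(Q n)) z) \<le> B n"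
  and cc: "\<And>n. norm (cc n) * B n \<le> (1/2)^n"
  shows "((\<lambda>z. \<Sum>n. cc n * poly ((pderiv^^k)(Q n)) z) has_field_derivative
           (\<Sum>n. cc n * poly ((pderiv^^Suc k)(Q n)) z)) (at z)"
proof -
  let ?S = "ball (0::complex) (norm z + 1)"
  have sub: "?S \<subseteq> cball 0 (norm z + 1)" by (rule ball_subset_cball)
  have zS: "z \<in> ?S" by simp
  have zc: "z \<in> cball 0 (norm z + 1)" by simp
  have tb: "eventually (\<lambda>n. \<forall>x\<in>cball (0::complex) R. norm (cc n * poly ((pderiv^^k')(Q n)) x) \<le> (1/2)^n) sequentially" for R k'
    using B cc by (rule term_bound)
  have sm: "summable (\<lambda>n::nat. (1/2::real)^n)" by simp
  have ev: "eventually (\<lambda>n. \<forall>x\<in>?S. norm (cc n * poly ((pderiv^^Suc k)(Q n)) x) \<le> (1/2)^n) sequentially"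
    using tb[of "norm z + 1" "Suc k"]
  proof (rule eventually_mono)
    fix n assume H: "\<forall>x\<in>cball (0::complex) (norm z + 1). norm (cc n * poly ((pderiv^^Suc k)(Q n)) x) \<le> (1/2)^n"
    show "\<forall>x\<in>?S. norm (cc n * poly ((pderiv^^Suc k)(Q n)) x) \<le> (1/2)^n"
    proof
      fix x assume "x \<in> ?S"
      then have "x \<in> cball 0 (norm z + 1)" using sub by blast
      then show "norm (cc n * poly ((pderiv^^Suc k)(Q n)) x) \<le> (1/2)^n" using H by blast
    qed
  qed
  have uc: "uniformly_convergent_on ?S (\<lambda>n x. \<Sum>i<n. cc i * poly ((pderiv^^Suc k)(Q i)) x)"
    by (rule Weierstrass_m_test'_ev[OF ev sm])
  have ev0: "eventually (\<lambda>n. norm (cc n * poly ((pderiv^^k)(Q n)) z) \<le> (1/2)^n) sequentially"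
    using tb[of "norm z + 1" k]
    by (rule eventually_mono) (erule bspec, rule zc)
  then obtain N where N: "\<And>n. n \<ge> N \<Longrightarrow> norm (cc n * poly ((pderiv^^k)(Q n)) z) \<le> (1/2)^n"
    unfolding eventually_sequentially by blast
  have s0: "summable (\<lambda>n. cc n * poly ((pderiv^^k)(Q n)) z)"
    by (rule summable_comparison_test'[OF sm N])
  have d: "((\<lambda>x. cc n * poly ((pderiv^^k)(Q n)) x) has_field_derivative
            cc n * poly ((pderiv^^Suc k)(Q n)) x) (at x within ?S)" if "x \<in> ?S" for n x
  proof -
    have "((\<lambda>x. poly ((pderiv^^k)(Q n)) x) has_field_derivative poly (pderiv ((pderiv^^k)(Q n))) x) (at x)"
      by (rule poly_DERIV)
    then have "((\<lambda>x. cc n * poly ((pderiv^^k)(Q n)) x) has_field_derivative cc n * poly (pderiv ((pderiv^^k)(Q n))) x) (at x)"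
      by (rule DERIV_cmult)
    then show ?thesis by (simp add: has_field_derivative_at_within)
  qed
  have zi: "z \<in> interior ?S" by simp
  show ?thesis
    by (rule has_field_derivative_series'(2)[OF convex_ball d uc zS s0 zi])
qed



lemma pderiv_power_mult:
  fixes a :: complex and g :: "complex poly"
  shows "k \<le> m \<Longrightarrow> \<exists>h. (pderiv^^k) ([:-a,1:]^m * g) = [:-a,1:]^(m-k) * h \<and> (poly g a \<noteq> 0 \<longrightarrow> poly h a \<noteq> 0)"
proof (induction k)
  case 0
  then show ?case by auto
next
  case (Suc k)
  then obtain h where h: "(pderiv^^k) ([:-a,1:]^m * g) = [:-a,1:]^(m-k) * h"
    and hn: "poly g a \<noteq> 0 \<longrightarrow> poly h a \<noteq> 0" by auto
  obtain j where j: "m - k = Suc j" using Suc.prems by (metis Suc_diff_Suc Suc_le_lessD)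
  have mj: "m - Suc k = j" using j by simp
  define h' where "h' = smult (of_nat (Suc j)) h + [:-a,1:] * pderiv h"
  have "(pderiv^^Suc k) ([:-a,1:]^m * g) = pderiv ([:-a,1:]^Suc j * h)" using h j by simp
  also have "\<dots> = [:-a,1:]^j * h'"
  proof -
    have px: "pderiv [:-a,1:] = (1::complex poly)" by (simp add: pderiv_pCons)
    have "pderiv ([:-a,1:]^Suc j * h) = pderiv ([:-a,1:]^Suc j) * h + [:-a,1:]^Suc j * pderiv h"
      by (metis pderiv_mult add.commute mult.commute)
    also have "pderiv ([:-a,1:]^Suc j) = smult (of_nat (Suc j)) ([:-a,1:]^j)"
      by (simp only: pderiv_power_Suc px mult_1_right)
    finally show ?thesis unfolding h'_def
      by (simp only: power_Suc distrib_left mult_smult_left mult_smult_right mult.assoc mult.left_commute[of "[:-a,1:]"])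
  qed
  finally have e: "(pderiv^^Suc k) ([:-a,1:]^m * g) = [:-a,1:]^(m - Suc k) * h'" using mj by simp
  have nz: "(1 + of_nat j :: complex) \<noteq> 0"
    by (metis of_nat_Suc of_nat_eq_0_iff Zero_not_Suc add.commute)
  have "poly g a \<noteq> 0 \<longrightarrow> poly h' a \<noteq> 0" using hn nz unfolding h'_def by simp
  with e show ?case by blast
qed

lemma pderiv_vanish:
  fixes a :: complex and g :: "complex poly"
  assumes "k < m"
  shows "poly ((pderiv^^k) ([:-a,1:]^m * g)) a = 0"
proof -
  obtain h where "(pderiv^^k) ([:-a,1:]^m * g) = [:-a,1:]^(m-k) * h"
    using pderiv_power_mult[of k m a g] assms by auto
  then show ?thesis using assms by (simp add: poly_power)
qed

lemma pderiv_nonvanish: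
  fixes a :: complex and g :: "complex poly"
  assumes "poly g a \<noteq> 0"
  shows "poly ((pderiv^^m) ([:-a,1:]^m * g)) a \<noteq> 0"
proof -
  obtain h where "(pderiv^^m) ([:-a,1:]^m * g) = [:-a,1:]^(m-m) * h" "poly h a \<noteq> 0"
    using pderiv_power_mult[of m m a g] assms by auto
  then show ?thesis by simp
qed

lemma deriv_funpow_poly: "(deriv^^k) (poly (p::complex poly)) = poly ((pderiv^^k) p)"
proof (induction k)
  case 0 then show ?case by simp
next
  case (Suc k)
  have "deriv (poly ((pderiv^^k) p)) = poly (pderiv ((pderiv^^k) p))"
    by (rule ext, rule DERIV_imp_deriv, rule poly_DERIV)
  then show ?case using Suc by simp
qed

lemma pderiv_funpow_zero: "degree p < k \<Longrightarrow> (pderiv^^k) (p::complex poly) = 0"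
proof (induction k arbitrary: p)
  case 0 then show ?case by simp
next
  case (Suc k)
  have z: "(pderiv^^k) (0::complex poly) = 0" for k
    by (induction k) (auto simp: pderiv_0)
  show ?case
  proof (cases "degree p = 0")
    case True
    then have "pderiv p = 0" by (simp add: pderiv_eq_0_iff)
    then show ?thesis by (simp add: funpow_Suc_right z del: funpow.simps)
  next
    case False
    then have "degree (pderiv p) < k" using Suc.prems by (simp add: degree_pderiv)
    then show ?thesis using Suc.IH by (simp add: funpow_Suc_right del: funpow.simps)
  qed
qed



lemma triangle_mono: "a \<le> b \<Longrightarrow> triangle a \<le> triangle b"
proof -
  have "triangle a \<le> triangle (a + d)" for d by (induction d) auto
  then show "a \<le> b \<Longrightarrow> triangle a \<le> triangle b" by (metis le_add_diff_inverse)
qed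

lemma prod_encode_mono2: "s \<le> t \<Longrightarrow> prod_encode (i, s) \<le> prod_encode (i, t)"
  unfolding prod_encode_def using triangle_mono[of "i+s" "i+t"] by simp

lemma dense_pick:
  fixes T :: "complex set"
  assumes "closure T = UNIV" "r > 0"
  shows "\<exists>t\<in>T. t \<noteq> 0 \<and> norm (t - V) < r"
proof -
  obtain x where x: "x \<in> ball V r" "x \<noteq> 0"
  proof (cases "V + of_real (r/2) = 0")
    case True
    have V: "V = - of_real (r/2)" using True by (simp add: add_eq_0_iff)
    have "V + of_real (r/4) = - of_real (r/4)" unfolding V by (simp add: field_simps)
    moreover have "(of_real (r/4) :: complex) \<noteq> 0" using assms(2) by simp
    ultimately have "V + of_real (r/4) \<noteq> 0" by (metis neg_equal_0_iff_equal)
    moreover have "V + of_real (r/4) \<in> ball V r" using assms(2) by (simp add: dist_norm)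
    ultimately show ?thesis using that by blast
  next
    case False
    then show ?thesis using that[of "V + of_real (r/2)"] assms(2)
      by (auto simp: dist_norm)
  qed
  have "open (ball V r - {0})" by auto
  moreover have "(ball V r - {0}) \<inter> closure T \<noteq> {}" using x assms(1) by auto
  ultimately have "(ball V r - {0}) \<inter> T \<noteq> {}" using open_Int_closure_eq_empty by blast
  then show ?thesis by (auto simp: dist_norm norm_minus_commute)
qed

lemma pick_ex:
  fixes T :: "complex set"
  assumes "closure T = UNIV" "e > 0" "a \<Longrightarrow> w \<noteq> 0"
  shows "\<exists>c. norm c \<le> e \<and> (\<not> a \<longrightarrow> c = 0) \<and> (a \<longrightarrow> V + c * w \<in> T - {0})"
proof (cases a)
  case False
  then show ?thesis using assms by (intro exI[of _ 0]) auto
next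
  case True
  then have w: "w \<noteq> 0" using assms by auto
  then have "e * norm w > 0" using assms by auto
  then obtain t where t: "t \<in> T" "t \<noteq> 0" "norm (t - V) < e * norm w"
    using dense_pick[OF assms(1)] by blast
  define c where "c = (t - V) / w"
  have "norm c \<le> e" using t w unfolding c_def by (simp add: norm_divide divide_le_eq)
  moreover have "V + c * w = t" using w unfolding c_def by simp
  ultimately show ?thesis using True t by auto
qed



theorem corollary1:
  fixes \<Sigma> T :: "complex set"
  assumes "countable \<Sigma>"
    and "closure T = UNIV"
  shows "\<exists>f. transcendental_entire f \<and> (\<forall>s::nat. ((deriv ^^ s) f) ` \<Sigma> \<subseteq> T)"
proof -
  define S' where "S' = insert 0 \<Sigma>"
  have cS: "countable S'" using assms(1) unfolding S'_def by simp
  define idx where "idx = to_nat_on S'"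
  define act where "act n \<longleftrightarrow> fst (prod_decode n) \<in> idx ` S'" for n
  define pt where "pt n = from_nat_into S' (fst (prod_decode n))" for n
  define od where "od n = snd (prod_decode n)" for n
  define Q where "Q n = [:-pt n,1:]^(od n) * (\<Prod>j \<in> {j. j<n \<and> act j \<and> pt j \<noteq> pt n}. [:-pt j,1:]^(Suc (od j)))" for n
  define w where "w n = poly ((pderiv^^od n)(Q n)) (pt n)" for n

  have enc: "act (prod_encode (idx \<sigma>, s)) \<and> pt (prod_encode (idx \<sigma>, s)) = \<sigma> \<and> od (prod_encode (idx \<sigma>, s)) = s"
    if "\<sigma> \<in> S'" for \<sigma> s
    using that cS unfolding act_def pt_def od_def idx_def by auto
  have same_idx: "fst (prod_decode j) = fst (prod_decode n)" if "act j" "act n" "pt j = pt n" for j n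
    using that unfolding act_def pt_def idx_def by (metis to_nat_on_from_nat_into)
  have ord_lt: "od j < od n" if "act j" "act n" "pt j = pt n" "j < n" for j n
  proof (rule ccontr)
    assume "\<not> od j < od n"
    then have "od n \<le> od j" by simp
    then have "prod_encode (fst (prod_decode n), od n) \<le> prod_encode (fst (prod_decode n), od j)"
      by (rule prod_encode_mono2)
    also have "prod_encode (fst (prod_decode n), od j) = j"
      using same_idx[OF that(1-3)] unfolding od_def by (metis prod.collapse prod_decode_inverse)
    finally have "n \<le> j" unfolding od_def by simp
    then show False using that(4) by simp
  qed
  have vanish: "poly ((pderiv^^od j)(Q n)) (pt j) = 0" if "act j" "act n" "j < n" for j n
  proof (cases "pt j = pt n")
    case True
    then show ?thesis unfolding Q_def using ord_lt[OF that(1,2) True that(3)]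
      by (simp add: pderiv_vanish)
  next
    case False
    define F where "F = {j. j<n \<and> act j \<and> pt j \<noteq> pt n}"
    have fin: "finite F" unfolding F_def by simp
    have jF: "j \<in> F" using that False unfolding F_def by simp
    define g where "g i = [:-pt i,1:]^(Suc (od i))" for i
    have pr: "(\<Prod>i\<in>F. g i) = g j * (\<Prod>i\<in>F-{j}. g i)" by (rule prod.remove[OF fin jF])
    have "Q n = [:-pt n,1:]^(od n) * (\<Prod>i\<in>F. g i)" unfolding Q_def F_def g_def by simp
    also have "\<dots> = g j * ([:-pt n,1:]^(od n) * (\<Prod>i\<in>F-{j}. g i))" unfolding pr by (rule mult.left_commute)
    finally have "Q n = [:-pt j,1:]^(Suc (od j)) * ([:-pt n,1:]^(od n) * (\<Prod>i\<in>F-{j}. g i))"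
      unfolding g_def by simp
    then show ?thesis by (simp only: pderiv_vanish lessI)
  qed
  have wnz: "w n \<noteq> 0" if "act n" for n
  proof -
    have "poly (\<Prod>j \<in> {j. j<n \<and> act j \<and> pt j \<noteq> pt n}. [:-pt j,1:]^(Suc (od j))) (pt n) \<noteq> 0"
      by (auto simp: poly_prod poly_power)
    then show ?thesis unfolding w_def Q_def by (rule pderiv_nonvanish)
  qed

  have bnd: "\<exists>B. \<forall>k\<le>n. \<forall>z. norm z \<le> real n \<longrightarrow> norm (poly ((pderiv^^k)(Q n)) z) \<le> B" for n
  proof -
    let ?phi = "\<lambda>z. \<Sum>k\<le>n. norm (poly ((pderiv^^k)(Q n)) z)"
    have "continuous_on (cball 0 (real n)) ?phi"
      by (intro continuous_intros)
    then have "compact (?phi ` cball 0 (real n))" by (intro compact_continuous_image) auto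
    then obtain B where B: "\<forall>x\<in>?phi ` cball 0 (real n). norm x \<le> B"
      using compact_imp_bounded bounded_iff by metis
    show ?thesis
    proof (intro exI allI impI)
      fix k z assume k: "k \<le> n" and z: "norm (z::complex) \<le> real n"
      have "norm (poly ((pderiv^^k)(Q n)) z) \<le> ?phi z"
        by (rule member_le_sum) (use k in auto)
      also have "\<dots> \<le> B"
      proof -
        have "z \<in> cball 0 (real n)" using z by (simp add: dist_norm)
        then have "norm (?phi z) \<le> B" using B by blast
        then show ?thesis by simp
      qed
      finally show "norm (poly ((pderiv^^k)(Q n)) z) \<le> B" .
    qed
  qed
  define B where "B n = (SOME B. \<forall>k\<le>n. \<forall>z. norm z \<le> real n \<longrightarrow> norm (poly ((pderiv^^k)(Q n)) z) \<le> B)" for n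
  have B: "norm (poly ((pderiv^^k)(Q n)) z) \<le> B n" if "k \<le> n" "norm z \<le> real n" for n k z
    using someI_ex[OF bnd[of n]] that unfolding B_def by blast
  define e where "e n = (1/2)^n / (1 + \<bar>B n\<bar>)" for n :: nat
  have epos: "e n > 0" for n unfolding e_def by (simp add: add_pos_nonneg)
  define pick where "pick n V = (SOME c. norm c \<le> e n \<and> (\<not> act n \<longrightarrow> c = 0) \<and> (act n \<longrightarrow> V + c * w n \<in> T - {0}))" for n V
  have pick: "norm (pick n V) \<le> e n \<and> (\<not> act n \<longrightarrow> pick n V = 0) \<and> (act n \<longrightarrow> V + pick n V * w n \<in> T - {0})" for n V
    unfolding pick_def by (rule someI_ex, rule pick_ex[OF assms(2) epos wnz])
  define Sf where "Sf = rec_nat (\<lambda>k z. 0) (\<lambda>n V. \<lambda>k z. V k z + pick n (V (od n) (pt n)) * poly ((pderiv^^k)(Q n)) z)"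
  define cc where "cc n = pick n (Sf n (od n) (pt n))" for n
  have Sf_sum: "Sf n k z = (\<Sum>i<n. cc i * poly ((pderiv^^k)(Q i)) z)" for n k z
    by (induction n arbitrary: k z) (simp_all add: Sf_def cc_def)
  have ccb: "norm (cc n) * B n \<le> (1/2)^n" for n
  proof -
    have "norm (cc n) \<le> e n" using pick unfolding cc_def by blast
    have "norm (cc n) * B n \<le> norm (cc n) * (1 + \<bar>B n\<bar>)"
      by (intro mult_left_mono) auto
    also have "\<dots> \<le> e n * (1 + \<bar>B n\<bar>)"
      using \<open>norm (cc n) \<le> e n\<close> by (intro mult_right_mono) auto
    finally have "norm (cc n) * B n \<le> e n * (1 + \<bar>B n\<bar>)" .
    also have "\<dots> = (1/2)^n" unfolding e_def by (simp add: add_pos_nonneg)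
    finally show ?thesis .
  qed
  define F where "F k z = (\<Sum>n. cc n * poly ((pderiv^^k)(Q n)) z)" for k z
  have DF: "(F k has_field_derivative F (Suc k) z) (at z)" for k z
    unfolding F_def[abs_def] using series_deriv[OF B ccb] by blast
  have derivF: "(deriv^^k) (F 0) = F k" for k
  proof (induction k)
    case 0 then show ?case by simp
  next
    case (Suc k)
    have "deriv (F k) = F (Suc k)" by (rule ext, rule DERIV_imp_deriv, rule DF)
    then show ?case using Suc by simp
  qed
  have val: "F (od j) (pt j) \<in> T - {0}" if "act j" for j
  proof -
    have z: "cc n * poly ((pderiv^^od j)(Q n)) (pt j) = 0" if "n \<notin> {..<Suc j}" for n
    proof (cases "act n")
      case True
      then show ?thesis using vanish[OF \<open>act j\<close> True] that by simp
    next
      case False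
      then show ?thesis using pick unfolding cc_def by simp
    qed
    have "(\<lambda>n. cc n * poly ((pderiv^^od j)(Q n)) (pt j)) sums (\<Sum>n<Suc j. cc n * poly ((pderiv^^od j)(Q n)) (pt j))"
      by (rule sums_finite) (use z in auto)
    then have "F (od j) (pt j) = Sf (Suc j) (od j) (pt j)" unfolding F_def Sf_sum by (simp add: sums_iff)
    also have "\<dots> = Sf j (od j) (pt j) + cc j * w j" unfolding Sf_sum w_def by simp
    finally show ?thesis using pick[of j "Sf j (od j) (pt j)"] that unfolding cc_def by simp
  qed
  have Fval: "F s \<sigma> \<in> T - {0}" if "\<sigma> \<in> S'" for s \<sigma>
    using val[of "prod_encode (idx \<sigma>, s)"] enc[OF that, of s] by simp
  have hol: "F 0 holomorphic_on UNIV"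
    unfolding holomorphic_on_def field_differentiable_def
    using DF by (blast intro: has_field_derivative_at_within)
  have notpoly: "\<not> (\<exists>p :: complex poly. \<forall>z. F 0 z = poly p z)"
  proof
    assume "\<exists>p :: complex poly. \<forall>z. F 0 z = poly p z"
    then obtain p :: "complex poly" where "F 0 = poly p" by blast
    then have "F (Suc (degree p)) = poly ((pderiv^^(Suc (degree p))) p)"
      using derivF deriv_funpow_poly by metis
    then have "F (Suc (degree p)) 0 = 0" by (simp add: pderiv_funpow_zero del: funpow.simps)
    moreover have "F (Suc (degree p)) 0 \<noteq> 0" using Fval[of 0] unfolding S'_def by auto
    ultimately show False by simp
  qed
  show ?thesis
  proof (intro exI conjI allI)
    show "transcendental_entire (F 0)" unfolding transcendental_entire_def using hol notpoly by blast
    fix s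
    show "(deriv ^^ s) (F 0) ` \<Sigma> \<subseteq> T" unfolding derivF using Fval unfolding S'_def by blast
  qed
qed

end
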